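(* Let $\sigma_j=1/\log_2(j+1)$, $j\ge1$, and $\mathcal{K}(\sigma)=\{\sigma_je_j\}_{j=1}^\infty\cup\{0\}\subset c_0$. Then $\tilde\varepsilon_n(\mathcal{K}(\sigma))_{c_0}\asymp\frac1n$ for $n\ge1$, and for every $\gamma>2$, $d_n^\gamma(\mathcal{K}(\sigma))_{c_0}\asymp\frac{1}{n\log_2(n+1)}$ for $n\ge1$.
   Context: $c_0$ denotes the Banach space of real sequences converging to $0$ with the norm $\|x\|=\sup_j|x_j|$, and $(e_j)$ is its standard unit vector basis. $a_n\asymp b_n$ means there are constants $0<c\le C$ independent of $n$ (possibly depending on $\gamma$) with $cb_n\le a_n\le Cb_n$. The inner entropy number $\tilde\varepsilon_n(\mathcal{K})_{c_0}$ is the infimum of all $\varepsilon>0$ such that $\mathcal{K}$ is covered by $2^n$ closed balls of radius $\varepsilon$ with centers in $\mathcal{K}$. For $k\ge1$ and a norm $\|\cdot\|_{Y_k}$ on $\mathbb{R}^k$ let $B_{Y_k}=\{y\in\mathbb{R}^k:\|y\|_{Y_k}\le1\}$; $d^\gamma(\mathcal{K},Y_k)_{c_0}=\inf_{\Phi}\sup_{f\in\mathcal{K}}\inf_{y\in B_{Y_k}}\|f-\Phi(y)\|$, the infimum over all maps $\Phi:B_{Y_k}\to c_0$ with $\|\Phi(y)-\Phi(y')\|\le\gamma\|y-y'\|_{Y_k}$; and $d_n^\gamma(\mathcal{K})_{c_0}=\inf_{1\le k\le n}\inf_{\|\cdot\|_{Y_k}}d^\gamma(\mathcal{K},Y_k)_{c_0}$,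 the inner infimum over all norms on $\mathbb{R}^k$. *)

theory Defs
  imports "HOL-Analysis.Analysis"
begin

text \<open>The space c_0: real sequences tending to 0 (coordinates indexed by nat,
  coordinate k corresponding to the paper's index j = k+1), with the sup norm.\<close>

definition c0 :: "(nat \<Rightarrow> real) set" where
  "c0 = {x. x \<longlonglongrightarrow> 0}"

definition c0norm :: "(nat \<Rightarrow> real) \<Rightarrow> real" where
  "c0norm x = (SUP j. \<bar>x j\<bar>)"

definition unitvec :: "nat \<Rightarrow> nat \<Rightarrow> real" where
  "unitvec k = (\<lambda>i. if i = k then 1 else 0)"

definition sigma :: "nat \<Rightarrow> real" where
  "sigma j = 1 / log 2 (real j + 1)"

definition Ksigma :: "(nat \<Rightarrow> real) set" where
  "Ksigma = {(\<lambda>i. sigma (k + 1) * unitvec k i) | k. True} \<union> {(\<lambda>i. 0)}"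

definition inner_entropy :: "(nat \<Rightarrow> real) set \<Rightarrow> nat \<Rightarrow> real" where
  "inner_entropy K n = Inf {eps. eps > 0 \<and>
     (\<exists>C. C \<subseteq> K \<and> finite C \<and> card C \<le> 2 ^ n \<and>
        (\<forall>f\<in>K. \<exists>c\<in>C. c0norm (\<lambda>i. f i - c i) \<le> eps))}"

text \<open>R^k is represented as the sequences vanishing from index k on.\<close>
definition Rk :: "nat \<Rightarrow> (nat \<Rightarrow> real) set" where
  "Rk k = {y. \<forall>i\<ge>k. y i = 0}"

definition is_norm_on_Rk :: "nat \<Rightarrow> ((nat \<Rightarrow> real) \<Rightarrow> real) \<Rightarrow> bool" where
  "is_norm_on_Rk k N \<longleftrightarrow>
     (\<forall>x\<in>Rk k. N x \<ge> 0 \<and> (N x = 0 \<longleftrightarrow> x = (\<lambda>i. 0))) \<and>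
     (\<forall>x\<in>Rk k. \<forall>c::real. N (\<lambda>i. c * x i) = \<bar>c\<bar> * N x) \<and>
     (\<forall>x\<in>Rk k. \<forall>y\<in>Rk k. N (\<lambda>i. x i + y i) \<le> N x + N y)"

definition unit_ball_Rk :: "nat \<Rightarrow> ((nat \<Rightarrow> real) \<Rightarrow> real) \<Rightarrow> (nat \<Rightarrow> real) set" where
  "unit_ball_Rk k N = {y \<in> Rk k. N y \<le> 1}"

definition lip_maps ::
  "real \<Rightarrow> nat \<Rightarrow> ((nat \<Rightarrow> real) \<Rightarrow> real) \<Rightarrow> ((nat \<Rightarrow> real) \<Rightarrow> (nat \<Rightarrow> real)) set" where
  "lip_maps \<gamma> k N = {\<Phi>. (\<forall>y\<in>unit_ball_Rk k N. \<Phi> y \<in> c0) \<and>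
     (\<forall>y\<in>unit_ball_Rk k N. \<forall>y'\<in>unit_ball_Rk k N.
        c0norm (\<lambda>i. \<Phi> y i - \<Phi> y' i) \<le> \<gamma> * N (\<lambda>i. y i - y' i))}"

definition lip_width_fixed ::
  "real \<Rightarrow> (nat \<Rightarrow> real) set \<Rightarrow> nat \<Rightarrow> ((nat \<Rightarrow> real) \<Rightarrow> real) \<Rightarrow> real" where
  "lip_width_fixed \<gamma> K k N =
     (INF \<Phi>\<in>lip_maps \<gamma> k N. SUP f\<in>K. INF y\<in>unit_ball_Rk k N. c0norm (\<lambda>i. f i - \<Phi> y i))"

definition lip_width :: "real \<Rightarrow> (nat \<Rightarrow> real) set \<Rightarrow> nat \<Rightarrow> real" where
  "lip_width \<gamma> K n =
     Inf {lip_width_fixed \<gamma> K k N | k N. 1 \<le> k \<and> k \<le> n \<and> is_norm_on_Rk k N}"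

end

theory Submission
  imports Defs "Jordan_Normal_Form.Determinant"
begin


lemma Rk_zero: "(\<lambda>i. 0) \<in> Rk k" by (simp add: Rk_def)

lemma Rk_sum: assumes "finite J" "\<And>j. j \<in> J \<Longrightarrow> v j \<in> Rk k"
  shows "(\<lambda>i. \<Sum>j\<in>J. a j * v j i) \<in> Rk k"
  using assms by (auto simp: Rk_def)

lemma norm_N_zero: assumes "is_norm_on_Rk k N" shows "N (\<lambda>i. 0) = 0"
  using assms Rk_zero unfolding is_norm_on_Rk_def by blast

lemma norm_tri: assumes "is_norm_on_Rk k N" "x \<in> Rk k" "y \<in> Rk k"
  shows "N (\<lambda>i. x i + y i) \<le> N x + N y"
  using assms unfolding is_norm_on_Rk_def by blast

lemma norm_hom: assumes "is_norm_on_Rk k N" "x \<in> Rk k"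
  shows "N (\<lambda>i. c * x i) = \<bar>c\<bar> * N x"
  using assms unfolding is_norm_on_Rk_def by blast

lemma norm_nonneg: assumes "is_norm_on_Rk k N" "x \<in> Rk k"
  shows "N x \<ge> 0"
  using assms unfolding is_norm_on_Rk_def by blast

lemma norm_sum_le:
  assumes N: "is_norm_on_Rk k N" and "finite J" and v: "\<And>j. j \<in> J \<Longrightarrow> v j \<in> Rk k"
  shows "N (\<lambda>i. \<Sum>j\<in>J. a j * v j i) \<le> (\<Sum>j\<in>J. \<bar>a j\<bar> * N (v j))"
  using assms(2) v
proof (induction J rule: finite_induct)
  case empty
  then show ?case using norm_N_zero[OF N] by simp
next
  case (insert x F)
  have R1: "(\<lambda>i. a x * v x i) \<in> Rk k" using insert by (auto simp: Rk_def)
  have R2: "(\<lambda>i. \<Sum>j\<in>F. a j * v j i) \<in> Rk k" using insert by (intro Rk_sum) auto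
  have "N (\<lambda>i. \<Sum>j\<in>insert x F. a j * v j i) = N (\<lambda>i. a x * v x i + (\<Sum>j\<in>F. a j * v j i))"
    using insert by simp
  also have "\<dots> \<le> N (\<lambda>i. a x * v x i) + N (\<lambda>i. \<Sum>j\<in>F. a j * v j i)"
    using norm_tri[OF N R1 R2] by simp
  also have "N (\<lambda>i. a x * v x i) = \<bar>a x\<bar> * N (v x)"
    using norm_hom[OF N, of "v x" "a x"] insert by simp
  also have "N (\<lambda>i. \<Sum>j\<in>F. a j * v j i) \<le> (\<Sum>j\<in>F. \<bar>a j\<bar> * N (v j))" using insert by blast
  finally show ?case using insert by simp
qed

lemma floor_eq_close: assumes "\<lfloor>a::real\<rfloor> = \<lfloor>b\<rfloor>" shows "\<bar>a - b\<bar> < 1"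
proof -
  have fa: "real_of_int \<lfloor>a\<rfloor> \<le> a \<and> a < real_of_int (\<lfloor>a\<rfloor> + 1)" by (rule floor_correct)
  have fb: "real_of_int \<lfloor>b\<rfloor> \<le> b \<and> b < real_of_int (\<lfloor>b\<rfloor> + 1)" by (rule floor_correct)
  show ?thesis using fa fb assms by (simp add: abs_less_iff) linarith
qed

lemma packing:
  assumes N: "is_norm_on_Rk k N" and k: "1 \<le> k" and S: "S \<subseteq> unit_ball_Rk k N" "finite S"
    and rho: "\<rho> > 0"
    and sep: "\<And>s t. s \<in> S \<Longrightarrow> t \<in> S \<Longrightarrow> s \<noteq> t \<Longrightarrow> \<rho> \<le> N (\<lambda>i. s i - t i)"
  shows "card S \<le> (nat \<lfloor>2 * real k / \<rho>\<rfloor> + 1) ^ k"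
proof -
  define u where "u = (\<lambda>j::nat. (\<lambda>i::nat. if i = j then (1::real) else 0))"
  define \<epsilon> where "\<epsilon> = 1 / (1 + (\<Sum>j<k. N (u j)))"
  have uR: "u j \<in> Rk k" if "j < k" for j using that by (auto simp: u_def Rk_def)
  have Nu: "N (u j) \<ge> 0" if "j < k" for j using norm_nonneg[OF N uR[OF that]] .
  have sumpos: "(\<Sum>j<k. N (u j)) \<ge> 0" by (intro sum_nonneg) (use Nu in auto)
  have epos: "\<epsilon> > 0" using sumpos by (simp add: \<epsilon>_def)
  define E where "E = (\<lambda>j. (\<lambda>i. \<epsilon> * u j i))"
  have ER: "E j \<in> Rk k" if "j<k" for j using that by (auto simp: E_def u_def Rk_def)
  have EN: "N (E j) \<le> 1" if "j<k" for j
  proof -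
    have e1: "N (E j) = \<epsilon> * N (u j)" using norm_hom[OF N uR[OF that], of \<epsilon>] epos unfolding E_def by simp
    have "N (u j) \<le> (\<Sum>j<k. N (u j))" using Nu that by (intro member_le_sum) auto
    hence "\<epsilon> * N (u j) \<le> \<epsilon> * (\<Sum>j<k. N (u j))" using epos by simp
    also have "\<epsilon> * (\<Sum>j<k. N (u j)) \<le> 1" using sumpos by (simp add: \<epsilon>_def field_simps)
    finally show ?thesis using e1 by simp
  qed
  define S' where "S' = S \<union> E ` {..<k}"
  have S'ball: "S' \<subseteq> unit_ball_Rk k N" using S ER EN by (auto simp: S'_def unit_ball_Rk_def)
  have S'fin: "finite S'" using S by (simp add: S'_def)
  define T where "T = PiE {..<k} (\<lambda>_. S')"
  define M where "M = (\<lambda>t::nat \<Rightarrow> nat \<Rightarrow> real. mat k k (\<lambda>(i,j). t j i))"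
  define D where "D = (\<lambda>t. \<bar>det (M t)\<bar>)"
  have Tfin: "finite T" unfolding T_def by (intro finite_PiE) (use S'fin in auto)
  have ET: "restrict E {..<k} \<in> T" by (auto simp: T_def S'_def)
  have DE: "D (restrict E {..<k}) = \<epsilon> ^ k"
  proof -
    have "M (restrict E {..<k}) = \<epsilon> \<cdot>\<^sub>m 1\<^sub>m k"
      by (rule eq_matI) (auto simp: M_def E_def u_def)
    thus ?thesis using epos by (simp add: D_def)
  qed
  have TD: "D ` T \<noteq> {}" "finite (D ` T)" using ET Tfin by auto
  obtain t0 where t0: "t0 \<in> T" and t0eq: "D t0 = Max (D ` T)"
    using Max_in[OF TD(2) TD(1)] by auto
  have t0max: "D t \<le> D t0" if "t \<in> T" for t
    using t0eq Max_ge[OF TD(2)] that by auto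
  define A where "A = M t0"
  have A: "A \<in> carrier_mat k k" by (simp add: A_def M_def)
  have dA: "det A \<noteq> 0" using t0max[OF ET] DE zero_less_power[OF epos, of k] by (auto simp: D_def A_def)
  have AU: "A \<in> Units (ring_mat TYPE(real) k ())" by (rule det_non_zero_imp_unit[OF A dA])
  have "\<exists>B. B \<in> carrier_mat k k \<and> A * B = 1\<^sub>m k"
    using AU unfolding Units_def ring_mat_def by (simp; blast)
  then obtain B where B: "B \<in> carrier_mat k k" and AB: "A * B = 1\<^sub>m k" by blast
  define x where "x = (\<lambda>s. B *\<^sub>v vec k s)"
  have xc: "x s \<in> carrier_vec k" for s using B by (simp add: x_def)
  define cf where "cf = (\<lambda>s j. vec_index (x s) j)"
  have Ax: "A *\<^sub>v x s = vec k s" for s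
  proof -
    have "A *\<^sub>v x s = (A * B) *\<^sub>v vec k s" unfolding x_def
      using assoc_mult_mat_vec[OF A B, of "vec k s"] by simp
    thus ?thesis using AB by simp
  qed
  have t0S': "t0 j \<in> S'" if "j < k" for j using t0 that by (auto simp: T_def)
  have t0R: "t0 j \<in> Rk k" and t0N: "N (t0 j) \<le> 1" if "j<k" for j
    using S'ball t0S'[OF that] by (auto simp: unit_ball_Rk_def)
  have coef: "\<bar>cf s j\<bar> \<le> 1" if "s \<in> S" "j < k" for s j
  proof -
    have c1: "det (replace_col A (A *\<^sub>v x s) j) = cf s j * det A"
      unfolding cf_def by (rule cramer_lemma_mat[OF A xc that(2)])
    have c2: "replace_col A (A *\<^sub>v x s) j = M (t0(j := s))"
      unfolding Ax by (rule eq_matI) (auto simp: replace_col_def M_def A_def)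
    have c3: "t0(j := s) \<in> T" using t0S' that t0 unfolding T_def PiE_iff by (auto simp: S'_def extensional_def)
    have "\<bar>cf s j\<bar> * \<bar>det A\<bar> \<le> \<bar>det A\<bar>"
      using t0max[OF c3] c1 c2 unfolding D_def A_def by (simp add: abs_mult)
    thus ?thesis using dA by simp
  qed
  have repr: "s i = (\<Sum>j<k. cf s j * t0 j i)" if "s \<in> S" for s i
  proof (cases "i < k")
    case True
    have "s i = vec_index (vec k s) i" using True by simp
    also have "\<dots> = vec_index (A *\<^sub>v x s) i" using Ax by simp
    also have "\<dots> = (\<Sum>j<k. A $$ (i,j) * cf s j)"
    proof -
      have dx: "dim_vec (x s) = k" using xc by simp
      have "vec_index (A *\<^sub>v x s) i = Matrix.row A i \<bullet> x s" using A True by simp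
      also have "\<dots> = (\<Sum>j<k. vec_index (Matrix.row A i) j * cf s j)" by (simp add: scalar_prod_def dx atLeast0LessThan cf_def)
      also have "\<dots> = (\<Sum>j<k. A $$ (i,j) * cf s j)" using A True by (intro sum.cong) auto
      finally show ?thesis .
    qed
    also have "\<dots> = (\<Sum>j<k. cf s j * t0 j i)" using True
      by (intro sum.cong) (auto simp: A_def M_def)
    finally show ?thesis .
  next
    case False
    have "s \<in> Rk k" using S that by (auto simp: unit_ball_Rk_def)
    thus ?thesis using False t0R by (auto simp: Rk_def)
  qed
  have Ndiff: "N (\<lambda>i. s i - t i) \<le> (\<Sum>j<k. \<bar>cf s j - cf t j\<bar>)" if "s\<in>S" "t\<in>S" for s t
  proof -
    have "(\<lambda>i. s i - t i) = (\<lambda>i. \<Sum>j<k. (cf s j - cf t j) * t0 j i)"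
      using repr[OF that(1)] repr[OF that(2)] by (auto simp: sum_subtractf left_diff_distrib)
    hence "N (\<lambda>i. s i - t i) \<le> (\<Sum>j<k. \<bar>cf s j - cf t j\<bar> * N (t0 j))"
      using norm_sum_le[OF N, of "{..<k}" t0 "\<lambda>j. cf s j - cf t j"] t0R by simp
    also have "\<dots> \<le> (\<Sum>j<k. \<bar>cf s j - cf t j\<bar>)"
      using t0N by (intro sum_mono) (simp add: mult_left_le)
    finally show ?thesis .
  qed
  define G where "G = nat \<lfloor>2 * real k / \<rho>\<rfloor>"
  define cell where "cell = (\<lambda>s. \<lambda>j\<in>{..<k}. nat \<lfloor>(cf s j + 1) * real k / \<rho>\<rfloor>)"
  have cellin: "cell ` S \<subseteq> PiE {..<k} (\<lambda>_. {0..G})"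
  proof
    fix c assume "c \<in> cell ` S"
    then obtain s where s: "s \<in> S" and c: "c = cell s" by auto
    have "nat \<lfloor>(cf s j + 1) * real k / \<rho>\<rfloor> \<le> G" if "j < k" for j
    proof -
      have "(cf s j + 1) * real k / \<rho> \<le> 2 * real k / \<rho>"
        using coef[OF s that] rho by (intro divide_right_mono mult_right_mono) auto
      thus ?thesis unfolding G_def by (intro nat_mono floor_mono)
    qed
    thus "c \<in> PiE {..<k} (\<lambda>_. {0..G})" unfolding c cell_def by auto
  qed
  have inj: "inj_on cell S"
  proof (rule inj_onI, rule ccontr)
    fix s t assume s: "s \<in> S" and t: "t \<in> S" and eq: "cell s = cell t" and ne: "s \<noteq> t"
    have close: "\<bar>cf s j - cf t j\<bar> < \<rho> / real k" if j: "j < k" for j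
    proof -
      have "nat \<lfloor>(cf s j + 1) * real k / \<rho>\<rfloor> = nat \<lfloor>(cf t j + 1) * real k / \<rho>\<rfloor>"
        using fun_cong[OF eq, of j] j by (simp add: cell_def)
      moreover have "(cf s j + 1) * real k / \<rho> \<ge> 0" "(cf t j + 1) * real k / \<rho> \<ge> 0"
        using coef[OF s j] coef[OF t j] rho by auto
      ultimately have "\<lfloor>(cf s j + 1) * real k / \<rho>\<rfloor> = \<lfloor>(cf t j + 1) * real k / \<rho>\<rfloor>"
        by (simp add: nat_eq_iff2)  
      hence "\<bar>(cf s j + 1) * real k / \<rho> - (cf t j + 1) * real k / \<rho>\<bar> < 1"
        by (rule floor_eq_close)
      moreover have "(cf s j + 1) * real k / \<rho> - (cf t j + 1) * real k / \<rho> = (cf s j - cf t j) * (real k / \<rho>)"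
        using rho by (simp add: field_simps)
      ultimately have "\<bar>(cf s j - cf t j) * (real k / \<rho>)\<bar> < 1" by simp
      hence "\<bar>cf s j - cf t j\<bar> * (real k / \<rho>) < 1" using rho by (simp add: abs_mult)
      thus ?thesis using rho k by (simp add: field_simps)
    qed
    have "0 \<in> {..<k}" using k by simp
    hence nek: "{..<k} \<noteq> {}" by blast
    have "(\<Sum>j<k. \<bar>cf s j - cf t j\<bar>) < (\<Sum>j<k. \<rho> / real k)"
      by (rule sum_strict_mono[OF _ nek]) (use close in auto)
    also have "\<dots> = \<rho>" using k by simp
    finally have "N (\<lambda>i. s i - t i) < \<rho>" using Ndiff[OF s t] by simp
    thus False using sep[OF s t ne] by simp
  qed
  have "card S \<le> card (PiE {..<k} (\<lambda>_. {0..G}))"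
    by (rule card_inj_on_le[OF inj cellin]) (intro finite_PiE; simp)
  also have "\<dots> = (G + 1) ^ k" by (simp add: card_PiE)
  finally have "card S \<le> (G + 1) ^ k" .
  thus ?thesis by (simp only: G_def)
qed



lemma c0norm_ge: "bdd_above (range (\<lambda>j. \<bar>x j\<bar>)) \<Longrightarrow> \<bar>x j\<bar> \<le> c0norm x"
  unfolding c0norm_def by (rule cSUP_upper) auto

lemma c0norm_le: "(\<And>j. \<bar>x j\<bar> \<le> B) \<Longrightarrow> c0norm x \<le> B"
  unfolding c0norm_def by (rule cSUP_least) auto

lemma c0norm_nonneg: "bdd_above (range (\<lambda>j. \<bar>x j\<bar>)) \<Longrightarrow> 0 \<le> c0norm x"
  using c0norm_ge[of x 0] by simp

lemma c0norm_zero: "c0norm (\<lambda>i. 0) = 0"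
  by (simp add: c0norm_def)

lemma bdd_of_bound: "(\<And>j. \<bar>x j\<bar> \<le> B) \<Longrightarrow> bdd_above (range (\<lambda>j. \<bar>x j\<bar>))"
  by (intro bdd_aboveI[where M=B]) auto

lemma c0_bdd: assumes "x \<in> c0" shows "\<exists>B. \<forall>j. \<bar>x j\<bar> \<le> B"
proof -
  have "convergent x" using assms unfolding c0_def convergent_def by auto
  hence "Bseq x" by (rule convergent_imp_Bseq)
  thus ?thesis unfolding Bseq_def by auto
qed

lemma c0_bdd': "x \<in> c0 \<Longrightarrow> bdd_above (range (\<lambda>j. \<bar>x j\<bar>))"
  using c0_bdd bdd_of_bound by metis

lemma c0_finsupp: assumes "\<And>j. j \<ge> M \<Longrightarrow> x j = 0" shows "x \<in> c0"
proof -
  have "eventually (\<lambda>j. x j = 0) sequentially" using assms eventually_sequentially by blast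
  thus ?thesis unfolding c0_def by (simp add: tendsto_eventually)
qed

lemma c0_diff: "x \<in> c0 \<Longrightarrow> y \<in> c0 \<Longrightarrow> (\<lambda>i. x i - y i) \<in> c0"
  unfolding c0_def using tendsto_diff by fastforce

lemma c0norm_triangle:
  assumes "bdd_above (range (\<lambda>j. \<bar>x j\<bar>))" "bdd_above (range (\<lambda>j. \<bar>y j\<bar>))"
  shows "c0norm (\<lambda>i. x i + y i) \<le> c0norm x + c0norm y"
proof (rule c0norm_le)
  fix j
  have "\<bar>x j + y j\<bar> \<le> \<bar>x j\<bar> + \<bar>y j\<bar>" by (rule abs_triangle_ineq)
  also have "\<dots> \<le> c0norm x + c0norm y" using c0norm_ge[OF assms(1)] c0norm_ge[OF assms(2)] by (intro add_mono)
  finally show "\<bar>x j + y j\<bar> \<le> c0norm x + c0norm y" .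
qed

lemma Rk_bdd: assumes "y \<in> Rk k" shows "bdd_above (range (\<lambda>j. \<bar>y j\<bar>))"
proof -
  have "\<bar>y j\<bar> \<le> (\<Sum>i<k. \<bar>y i\<bar>)" for j
  proof (cases "j < k")
    case True thus ?thesis by (intro member_le_sum) auto
  next
    case False thus ?thesis using assms by (auto simp: Rk_def intro: sum_nonneg)
  qed
  thus ?thesis by (rule bdd_of_bound)
qed

lemma c0norm_is_norm: "is_norm_on_Rk k c0norm"
  unfolding is_norm_on_Rk_def
proof (intro conjI ballI allI)
  fix x assume x: "x \<in> Rk k"
  show "0 \<le> c0norm x" using c0norm_nonneg[OF Rk_bdd[OF x]] .
  show "(c0norm x = 0) = (x = (\<lambda>i. 0))"
  proof
    assume "c0norm x = 0"
    hence "\<bar>x j\<bar> \<le> 0" for j using c0norm_ge[OF Rk_bdd[OF x], of j] by simp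
    thus "x = (\<lambda>i. 0)" by fastforce
  qed (simp add: c0norm_zero)
  fix c :: real
  show "c0norm (\<lambda>i. c * x i) = \<bar>c\<bar> * c0norm x"
  proof (rule antisym)
    show "c0norm (\<lambda>i. c * x i) \<le> \<bar>c\<bar> * c0norm x"
      by (rule c0norm_le) (simp add: abs_mult mult_left_mono c0norm_ge[OF Rk_bdd[OF x]])
    show "\<bar>c\<bar> * c0norm x \<le> c0norm (\<lambda>i. c * x i)"
    proof (cases "c = 0")
      case True thus ?thesis by (simp add: c0norm_zero)
    next
      case False
      have cx: "(\<lambda>i. c * x i) \<in> Rk k" using x by (auto simp: Rk_def)
      have "\<bar>x j\<bar> \<le> c0norm (\<lambda>i. c * x i) / \<bar>c\<bar>" for j
        using c0norm_ge[OF Rk_bdd[OF cx], of j] False by (simp add: abs_mult field_simps)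
      hence "c0norm x \<le> c0norm (\<lambda>i. c * x i) / \<bar>c\<bar>" by (rule c0norm_le)
      thus ?thesis using False by (simp add: field_simps)
    qed
  qed
next
  fix x y assume x: "x \<in> Rk k" and y: "y \<in> Rk k"
  show "c0norm (\<lambda>i. x i + y i) \<le> c0norm x + c0norm y"
    by (rule c0norm_triangle[OF Rk_bdd[OF x] Rk_bdd[OF y]])
qed

definition fK :: "nat \<Rightarrow> nat \<Rightarrow> real" where
  "fK k = (\<lambda>i. sigma (k + 1) * unitvec k i)"

lemma fK_apply: "fK k i = (if i = k then sigma (k+1) else 0)"
  by (simp add: fK_def unitvec_def)

lemma Ksigma_eq: "Ksigma = range fK \<union> {(\<lambda>i. 0)}"
  by (auto simp: Ksigma_def fK_def)

lemma sigma_pos: "j \<ge> 1 \<Longrightarrow> sigma j > 0"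
  by (simp add: sigma_def)

lemma sigma_le1: assumes "j \<ge> 1" shows "sigma j \<le> 1"
proof -
  have "log 2 (real j + 1) \<ge> log 2 2" using assms by (intro log_mono) auto
  thus ?thesis by (simp add: sigma_def)
qed

lemma sigma_mono: assumes "1 \<le> j" "j \<le> j'" shows "sigma j' \<le> sigma j"
proof -
  have "log 2 (real j + 1) \<le> log 2 (real j' + 1)" using assms by (intro log_mono) auto
  moreover have "log 2 (real j + 1) > 0" using assms by simp
  ultimately show ?thesis by (simp add: sigma_def frac_le)
qed

lemma fK_bound: "\<bar>fK k i\<bar> \<le> 1"
  using sigma_le1[of "k+1"] sigma_pos[of "k+1"] by (simp add: fK_apply)

lemma K_bound: "f \<in> Ksigma \<Longrightarrow> \<bar>f i\<bar> \<le> 1"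
  using fK_bound by (auto simp: Ksigma_eq)

lemma K_c0: "f \<in> Ksigma \<Longrightarrow> f \<in> c0"
proof -
  assume "f \<in> Ksigma"
  then consider "f = (\<lambda>i. 0)" | k where "f = fK k" by (auto simp: Ksigma_eq)
  thus "f \<in> c0"
  proof cases
    case 1 thus ?thesis by (intro c0_finsupp[of 0]) auto
  next
    case 2 thus ?thesis by (intro c0_finsupp[of "k+1"]) (auto simp: fK_apply)
  qed
qed

lemma fK_bdd: "bdd_above (range (\<lambda>j. \<bar>fK k j\<bar>))"
  using fK_bound by (rule bdd_of_bound)

lemma entropy_cover:
  assumes n: "n \<ge> 1"
  shows "\<exists>C. C \<subseteq> Ksigma \<and> finite C \<and> card C \<le> 2 ^ n \<and>
        (\<forall>f\<in>Ksigma. \<exists>c\<in>C. c0norm (\<lambda>i. f i - c i) \<le> 1 / real n)"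
proof -
  define C where "C = insert (\<lambda>i. 0) (fK ` {..<2^n - 1})"
  have C1: "C \<subseteq> Ksigma" "finite C" by (auto simp: C_def Ksigma_eq)
  have "card C \<le> Suc (card (fK ` {..<2^n - 1}))" unfolding C_def by (rule card_insert_le_m1) auto
  also have "card (fK ` {..<2^n - 1}) \<le> 2^n - 1" using card_image_le[of "{..<2^n - 1}" fK] by simp
  finally have C2: "card C \<le> 2^n" by (simp add: Suc_leI)
  have cov: "\<exists>c\<in>C. c0norm (\<lambda>i. f i - c i) \<le> 1 / real n" if f: "f \<in> Ksigma" for f
  proof -
    consider "f = (\<lambda>i. 0)" | k where "f = fK k" using f by (auto simp: Ksigma_eq)
    thus ?thesis
    proof cases
      case 1
      show ?thesis by (rule bexI[of _ "\<lambda>i. 0"]) (auto simp: 1 C_def c0norm_zero)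
    next
      case (2 k)
      show ?thesis
      proof (cases "k < 2^n - 1")
        case True
        have "fK k \<in> C" using True unfolding C_def by auto
        thus ?thesis by (intro bexI[of _ "fK k"]) (auto simp: 2 c0norm_zero)
      next
        case False
        have p: "(1::nat) \<le> 2^n" by simp
        have "2^n \<le> k + 2" using False p by linarith
        hence "real (2^n) \<le> real (k + 2)" by (simp only: of_nat_le_iff)
        hence "real (2^n) \<le> real k + 2" by simp
        hence "log 2 (real (2^n)) \<le> log 2 (real k + 2)" by (intro log_mono) auto
        hence lg: "real n \<le> log 2 (real (k + 1) + 1)" by (simp add: ac_simps)
        have "sigma (k+1) \<le> 1 / real n" using lg n by (simp add: sigma_def frac_le)
        hence "c0norm (\<lambda>i. f i - 0) \<le> 1 / real n"
          using sigma_pos[of "k+1"] by (intro c0norm_le) (auto simp: 2 fK_apply)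
        thus ?thesis by (intro bexI[of _ "\<lambda>i. 0"]) (auto simp: C_def)
      qed
    qed
  qed
  show ?thesis using C1 C2 cov by blast
qed

lemma entropy_upper:
  assumes n: "n \<ge> 1"
  shows "inner_entropy Ksigma n \<le> 1 / real n"
proof -
  define E where "E = {eps. eps > 0 \<and>
     (\<exists>C. C \<subseteq> Ksigma \<and> finite C \<and> card C \<le> 2 ^ n \<and>
        (\<forall>f\<in>Ksigma. \<exists>c\<in>C. c0norm (\<lambda>i. f i - c i) \<le> eps))}"
  have "1 / real n \<in> E" unfolding E_def using n entropy_cover[OF n] by auto
  moreover have "bdd_below E" unfolding E_def by (rule bdd_belowI[of _ 0]) auto
  ultimately have "Inf E \<le> 1 / real n" by (rule cInf_lower)
  thus ?thesis unfolding inner_entropy_def E_def .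
qed

lemma entropy_lower:
  assumes n: "n \<ge> 1"
  shows "1 / (2 * real n) \<le> inner_entropy Ksigma n"
proof -
  define E where "E = {eps. eps > 0 \<and>
     (\<exists>C. C \<subseteq> Ksigma \<and> finite C \<and> card C \<le> 2 ^ n \<and>
        (\<forall>f\<in>Ksigma. \<exists>c\<in>C. c0norm (\<lambda>i. f i - c i) \<le> eps))}"
  have s0: "sigma (2^n) \<le> sigma (k + 1)" if "k < 2^n" for k
    using that by (intro sigma_mono) auto
  have key: "sigma (2^n) \<le> eps" if "eps \<in> E" for eps
  proof (rule ccontr)
    assume lt: "\<not> sigma (2^n) \<le> eps"
    from that obtain C where C: "C \<subseteq> Ksigma" "finite C" "card C \<le> 2^n"
      and cov: "\<forall>f\<in>Ksigma. \<exists>c\<in>C. c0norm (\<lambda>i. f i - c i) \<le> eps" unfolding E_def by blast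
    have inC: "fK k \<in> C" if k: "k < 2^n" for k
    proof -
      obtain c where c: "c \<in> C" "c0norm (\<lambda>i. fK k i - c i) \<le> eps" using cov by (auto simp: Ksigma_eq)
      have cb: "bdd_above (range (\<lambda>j. \<bar>fK k j - c j\<bar>))"
        using c C by (intro c0_bdd' c0_diff K_c0) (auto simp: Ksigma_eq)
      have "\<bar>fK k k - c k\<bar> \<le> eps" using c0norm_ge[OF cb, of k] c by simp
      hence "\<bar>sigma (k+1) - c k\<bar> < sigma (k+1)" using lt s0[OF k] by (simp add: fK_apply)
      hence ck: "c k \<noteq> 0" by auto
      from c C consider "c = (\<lambda>i. 0)" | k' where "c = fK k'" by (auto simp: Ksigma_eq)
      thus ?thesis
      proof cases
        case 1 thus ?thesis using ck by simp
      next
        case (2 k') thus ?thesis using ck c by (auto simp: fK_apply split: if_splits)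
      qed
    qed
    obtain c0 where c0: "c0 \<in> C" "c0norm (\<lambda>i. 0 - c0 i) \<le> eps" using cov by (auto simp: Ksigma_eq)
    have c0n: "c0 \<notin> fK ` {..<2^n}"
    proof
      assume "c0 \<in> fK ` {..<2^n}"
      then obtain k where k: "k < 2^n" "c0 = fK k" by auto
      have "\<bar>0 - fK k k\<bar> \<le> eps" using c0norm_ge[OF bdd_of_bound, of "\<lambda>i. 0 - fK k i" 1 k] fK_bound c0 k
        by auto
      thus False using lt s0[OF k(1)] by (simp add: fK_apply)
    qed
    have injf: "inj_on fK {..<2^n}"
    proof (rule inj_onI)
      fix a b assume "fK a = fK b"
      hence "fK a a = fK b a" by simp
      thus "a = b" using sigma_pos[of "a+1"] by (auto simp: fK_apply split: if_splits)
    qed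
    have "insert c0 (fK ` {..<2^n}) \<subseteq> C" using inC c0 by auto
    hence "card (insert c0 (fK ` {..<2^n})) \<le> card C" using C by (intro card_mono) auto
    moreover have "card (insert c0 (fK ` {..<2^n})) = 2^n + 1"
      using c0n card_image[OF injf] by simp
    ultimately show False using C by simp
  qed
  have "1 / real n \<in> E" unfolding E_def using n entropy_cover[OF n] by auto
  hence "E \<noteq> {}" by auto
  hence "sigma (2^n) \<le> Inf E" using key by (intro cInf_greatest) auto
  moreover have "1 / (2 * real n) \<le> sigma (2^n)"
  proof -
    have "(0::real) < 2^n + 1" by (simp add: add_pos_pos)
    hence "log 2 (real (2^n) + 1) \<le> log 2 (2 ^ (n+1))"
      by (intro log_mono) auto
    also have "\<dots> = real n + 1" using log_pow_cancel[of "2::real" "n+1"] by simp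
    finally have "log 2 (real (2^n) + 1) \<le> 2 * real n" using n by simp
    moreover have "log 2 (real (2^n) + 1) > 0" by (subst zero_less_log_cancel_iff) (auto simp: add_pos_pos)
    ultimately show ?thesis unfolding sigma_def by (intro frac_le) auto
  qed
  ultimately show ?thesis unfolding inner_entropy_def E_def by simp
qed



abbreviation gval :: "nat \<Rightarrow> ((nat \<Rightarrow> real) \<Rightarrow> real) \<Rightarrow> ((nat \<Rightarrow> real) \<Rightarrow> (nat \<Rightarrow> real)) \<Rightarrow> (nat \<Rightarrow> real) \<Rightarrow> real"
  where "gval k N \<Phi> f \<equiv> (INF y\<in>unit_ball_Rk k N. c0norm (\<lambda>i. f i - \<Phi> y i))"

lemma ball_zero: assumes "is_norm_on_Rk k N" shows "(\<lambda>i. 0) \<in> unit_ball_Rk k N"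
  using norm_N_zero[OF assms] Rk_zero[of k] by (simp add: unit_ball_Rk_def)

lemma ball_Rk: "y \<in> unit_ball_Rk k N \<Longrightarrow> y \<in> Rk k"
  by (simp add: unit_ball_Rk_def)

lemma Rk_diff: "x \<in> Rk k \<Longrightarrow> y \<in> Rk k \<Longrightarrow> (\<lambda>i. x i - y i) \<in> Rk k"
  by (simp add: Rk_def)

lemma lip_zero: assumes N: "is_norm_on_Rk k N" and g: "\<gamma> \<ge> 0"
  shows "(\<lambda>y i. 0) \<in> lip_maps \<gamma> k N"
  unfolding lip_maps_def
proof (intro CollectI conjI ballI)
  fix y assume "y \<in> unit_ball_Rk k N"
  show "(\<lambda>i. 0::real) \<in> c0" by (rule c0_finsupp[of 0]) auto
next
  fix y y' assume y: "y \<in> unit_ball_Rk k N" and y': "y' \<in> unit_ball_Rk k N"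
  have "N (\<lambda>i. y i - y' i) \<ge> 0" using norm_nonneg[OF N Rk_diff[OF ball_Rk[OF y] ball_Rk[OF y']]] .
  thus "c0norm (\<lambda>i. 0 - 0) \<le> \<gamma> * N (\<lambda>i. y i - y' i)" using g by (simp add: c0norm_zero)
qed

lemma lip_c0: "\<Phi> \<in> lip_maps \<gamma> k N \<Longrightarrow> y \<in> unit_ball_Rk k N \<Longrightarrow> \<Phi> y \<in> c0"
  by (simp add: lip_maps_def)

lemma lip_lip: "\<Phi> \<in> lip_maps \<gamma> k N \<Longrightarrow> y \<in> unit_ball_Rk k N \<Longrightarrow> y' \<in> unit_ball_Rk k N
   \<Longrightarrow> c0norm (\<lambda>i. \<Phi> y i - \<Phi> y' i) \<le> \<gamma> * N (\<lambda>i. y i - y' i)"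
  by (simp add: lip_maps_def)

lemma diff_bdd: assumes "\<Phi> \<in> lip_maps \<gamma> k N" "y \<in> unit_ball_Rk k N" "f \<in> Ksigma"
  shows "bdd_above (range (\<lambda>j. \<bar>f j - \<Phi> y j\<bar>))"
  using assms by (intro c0_bdd' c0_diff K_c0 lip_c0)

lemma g_facts:
  assumes N: "is_norm_on_Rk k N" and Phi: "\<Phi> \<in> lip_maps \<gamma> k N"
  shows "bdd_above (gval k N \<Phi> ` Ksigma)"
    and "\<And>f. f \<in> Ksigma \<Longrightarrow> 0 \<le> gval k N \<Phi> f"
    and "\<And>f. f \<in> Ksigma \<Longrightarrow> bdd_below ((\<lambda>y. c0norm (\<lambda>i. f i - \<Phi> y i)) ` unit_ball_Rk k N)"
proof -
  have bb: "bdd_below ((\<lambda>y. c0norm (\<lambda>i. f i - \<Phi> y i)) ` unit_ball_Rk k N)" if f: "f \<in> Ksigma" for f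
    by (rule bdd_belowI[where m=0]) (auto intro: c0norm_nonneg diff_bdd[OF Phi _ f])
  thus "\<And>f. f \<in> Ksigma \<Longrightarrow> bdd_below ((\<lambda>y. c0norm (\<lambda>i. f i - \<Phi> y i)) ` unit_ball_Rk k N)" .
  show "\<And>f. f \<in> Ksigma \<Longrightarrow> 0 \<le> gval k N \<Phi> f"
    using ball_zero[OF N] by (intro cINF_greatest) (auto intro: c0norm_nonneg diff_bdd[OF Phi])
  obtain B where B: "\<And>j. \<bar>\<Phi> (\<lambda>i. 0) j\<bar> \<le> B" using c0_bdd[OF lip_c0[OF Phi ball_zero[OF N]]] by blast
  have "gval k N \<Phi> f \<le> 1 + B" if f: "f \<in> Ksigma" for f
  proof -
    have "gval k N \<Phi> f \<le> c0norm (\<lambda>i. f i - \<Phi> (\<lambda>i. 0) i)"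
      by (rule cINF_lower[OF bb[OF f] ball_zero[OF N]])
    also have "\<dots> \<le> 1 + B"
    proof (rule c0norm_le)
      fix j
      have "\<bar>f j - \<Phi> (\<lambda>i. 0) j\<bar> \<le> \<bar>f j\<bar> + \<bar>\<Phi> (\<lambda>i. 0) j\<bar>" by (rule abs_triangle_ineq4)
      thus "\<bar>f j - \<Phi> (\<lambda>i. 0) j\<bar> \<le> 1 + B" using K_bound[OF f, of j] B[of j] by linarith
    qed
    finally show ?thesis .
  qed
  thus "bdd_above (gval k N \<Phi> ` Ksigma)" by (intro bdd_aboveI[where M="1+B"]) auto
qed

lemma zero_in_K: "(\<lambda>i. 0) \<in> Ksigma" by (simp add: Ksigma_eq)

lemma SUP_nonneg:
  assumes N: "is_norm_on_Rk k N" and Phi: "\<Phi> \<in> lip_maps \<gamma> k N"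
  shows "0 \<le> (SUP f\<in>Ksigma. gval k N \<Phi> f)"
proof -
  have "0 \<le> gval k N \<Phi> (\<lambda>i. 0)" by (rule g_facts(2)[OF N Phi zero_in_K])
  also have "\<dots> \<le> (SUP f\<in>Ksigma. gval k N \<Phi> f)"
    by (rule cSUP_upper[OF zero_in_K g_facts(1)[OF N Phi]])
  finally show ?thesis .
qed

lemma lwf_nonneg:
  assumes N: "is_norm_on_Rk k N" and g: "\<gamma> \<ge> 0"
  shows "0 \<le> lip_width_fixed \<gamma> Ksigma k N"
  unfolding lip_width_fixed_def
  using lip_zero[OF N g] SUP_nonneg[OF N] by (intro cINF_greatest) auto

lemma lw_upper:
  assumes k: "1 \<le> k" "k \<le> n" and g: "\<gamma> \<ge> 0" and Phi: "\<Phi> \<in> lip_maps \<gamma> k c0norm"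
    and cov: "\<And>f. f \<in> Ksigma \<Longrightarrow> \<exists>y\<in>unit_ball_Rk k c0norm. c0norm (\<lambda>i. f i - \<Phi> y i) \<le> E"
  shows "lip_width \<gamma> Ksigma n \<le> E"
proof -
  note N = c0norm_is_norm[of k]
  have "lip_width \<gamma> Ksigma n \<le> lip_width_fixed \<gamma> Ksigma k c0norm"
    unfolding lip_width_def
  proof (rule cInf_lower)
    have "\<exists>k' N'. lip_width_fixed \<gamma> Ksigma k c0norm = lip_width_fixed \<gamma> Ksigma k' N' \<and> 1 \<le> k' \<and> k' \<le> n \<and> is_norm_on_Rk k' N'"
      using k N by (intro exI[of _ k] exI[of _ c0norm]) simp
    thus "lip_width_fixed \<gamma> Ksigma k c0norm \<in> {lip_width_fixed \<gamma> Ksigma k N |k N. 1 \<le> k \<and> k \<le> n \<and> is_norm_on_Rk k N}"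
      by (simp only: mem_Collect_eq)
    show "bdd_below {lip_width_fixed \<gamma> Ksigma k N |k N. 1 \<le> k \<and> k \<le> n \<and> is_norm_on_Rk k N}"
    proof (rule bdd_belowI[where m=0])
      fix x assume "x \<in> {lip_width_fixed \<gamma> Ksigma k N |k N. 1 \<le> k \<and> k \<le> n \<and> is_norm_on_Rk k N}"
      then obtain k' N' where "x = lip_width_fixed \<gamma> Ksigma k' N'" "is_norm_on_Rk k' N'" by (simp only: mem_Collect_eq) blast
      thus "0 \<le> x" using lwf_nonneg[OF _ g] by simp
    qed
  qed
  also have "lip_width_fixed \<gamma> Ksigma k c0norm \<le> (SUP f\<in>Ksigma. gval k c0norm \<Phi> f)"
    unfolding lip_width_fixed_def
  proof (rule cINF_lower[OF _ Phi])
    show "bdd_below ((\<lambda>\<Phi>. SUP f\<in>Ksigma. gval k c0norm \<Phi> f) ` lip_maps \<gamma> k c0norm)"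
    proof (rule bdd_belowI[where m=0])
      fix x assume "x \<in> (\<lambda>\<Phi>. SUP f\<in>Ksigma. gval k c0norm \<Phi> f) ` lip_maps \<gamma> k c0norm"
      then obtain \<Psi> where "\<Psi> \<in> lip_maps \<gamma> k c0norm" "x = (SUP f\<in>Ksigma. gval k c0norm \<Psi> f)" by blast
      thus "0 \<le> x" using SUP_nonneg[OF N] by simp
    qed
  qed
  also have "\<dots> \<le> E"
  proof (rule cSUP_least)
    show "Ksigma \<noteq> {}" using zero_in_K by auto
    fix f assume f: "f \<in> Ksigma"
    obtain y where y: "y \<in> unit_ball_Rk k c0norm" "c0norm (\<lambda>i. f i - \<Phi> y i) \<le> E" using cov[OF f] by blast
    have "gval k c0norm \<Phi> f \<le> c0norm (\<lambda>i. f i - \<Phi> y i)"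
      by (rule cINF_lower[OF g_facts(3)[OF N Phi f] y(1)])
    thus "gval k c0norm \<Phi> f \<le> E" using y by simp
  qed
  finally show ?thesis .
qed

lemma lw_lower:
  assumes n: "1 \<le> n" and g: "\<gamma> \<ge> 0"
    and H: "\<And>k N \<Phi>. 1 \<le> k \<Longrightarrow> k \<le> n \<Longrightarrow> is_norm_on_Rk k N \<Longrightarrow> \<Phi> \<in> lip_maps \<gamma> k N
              \<Longrightarrow> \<delta> \<le> (SUP f\<in>Ksigma. gval k N \<Phi> f)"
  shows "\<delta> \<le> lip_width \<gamma> Ksigma n"
  unfolding lip_width_def
proof (rule cInf_greatest)
  have "\<exists>k' N'. lip_width_fixed \<gamma> Ksigma 1 c0norm = lip_width_fixed \<gamma> Ksigma k' N' \<and> 1 \<le> k' \<and> k' \<le> n \<and> is_norm_on_Rk k' N'"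
    using n c0norm_is_norm[of 1] by (intro exI[of _ 1] exI[of _ c0norm]) simp
  hence "lip_width_fixed \<gamma> Ksigma 1 c0norm \<in> {lip_width_fixed \<gamma> Ksigma k N |k N. 1 \<le> k \<and> k \<le> n \<and> is_norm_on_Rk k N}"
    by (simp only: mem_Collect_eq)
  thus "{lip_width_fixed \<gamma> Ksigma k N |k N. 1 \<le> k \<and> k \<le> n \<and> is_norm_on_Rk k N} \<noteq> {}"
    by auto
  fix x assume "x \<in> {lip_width_fixed \<gamma> Ksigma k N |k N. 1 \<le> k \<and> k \<le> n \<and> is_norm_on_Rk k N}"
  then obtain k N where x: "x = lip_width_fixed \<gamma> Ksigma k N" and k: "1 \<le> k" "k \<le> n" and N: "is_norm_on_Rk k N"
    by (simp only: mem_Collect_eq) blast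
  show "\<delta> \<le> x" unfolding x lip_width_fixed_def
    using lip_zero[OF N g] H[OF k N] by (intro cINF_greatest) auto
qed

lemma lw_trivial: assumes "1 \<le> n" "\<gamma> \<ge> 0" shows "lip_width \<gamma> Ksigma n \<le> 1"
proof (rule lw_upper[of 1 n \<gamma> "\<lambda>y i. 0"])
  show "(\<lambda>y i. 0) \<in> lip_maps \<gamma> 1 c0norm" by (rule lip_zero[OF c0norm_is_norm assms(2)])
  fix f assume f: "f \<in> Ksigma"
  have "c0norm (\<lambda>i. f i - 0) \<le> 1" using K_bound[OF f] by (intro c0norm_le) simp
  thus "\<exists>y\<in>unit_ball_Rk 1 c0norm. c0norm (\<lambda>i. f i - 0) \<le> 1"
    using ball_zero[OF c0norm_is_norm] by blast
qed (use assms in auto)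



lemma core_lower:
  assumes N: "is_norm_on_Rk k N" and k1: "1 \<le> k" and Phi: "\<Phi> \<in> lip_maps \<gamma> k N" and g: "\<gamma> > 0"
    and d: "\<delta> > 0" and Mc: "\<And>i. i < Mc \<Longrightarrow> 3 * \<delta> \<le> sigma (i+1)"
    and AF: "(nat \<lfloor>2 * real k / (\<delta> / \<gamma>)\<rfloor> + 1) ^ k < Mc"
  shows "\<delta> \<le> (SUP f\<in>Ksigma. gval k N \<Phi> f)"
proof (rule ccontr)
  assume "\<not> ?thesis"
  hence W: "(SUP f\<in>Ksigma. gval k N \<Phi> f) < \<delta>" by simp
  have fi: "fK i \<in> Ksigma" for i by (simp add: Ksigma_eq)
  have "\<forall>i. \<exists>yy. i < Mc \<longrightarrow> yy \<in> unit_ball_Rk k N \<and> c0norm (\<lambda>j. fK i j - \<Phi> yy j) < \<delta>"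
  proof (intro allI)
    fix i
    have "gval k N \<Phi> (fK i) \<le> (SUP f\<in>Ksigma. gval k N \<Phi> f)"
      by (rule cSUP_upper[OF fi g_facts(1)[OF N Phi]])
    hence "gval k N \<Phi> (fK i) < \<delta>" using W by simp
    hence "\<exists>yy\<in>unit_ball_Rk k N. c0norm (\<lambda>j. fK i j - \<Phi> yy j) < \<delta>"
      using cInf_lessD[of "(\<lambda>y. c0norm (\<lambda>j. fK i j - \<Phi> y j)) ` unit_ball_Rk k N" \<delta>] ball_zero[OF N]
      by auto
    thus "\<exists>yy. i < Mc \<longrightarrow> yy \<in> unit_ball_Rk k N \<and> c0norm (\<lambda>j. fK i j - \<Phi> yy j) < \<delta>" by blast
  qed
  from choice[OF this] obtain y where
    y: "\<And>i. i < Mc \<Longrightarrow> y i \<in> unit_ball_Rk k N \<and> c0norm (\<lambda>j. fK i j - \<Phi> (y i) j) < \<delta>" by blast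
  have sep: "\<delta> / \<gamma> < N (\<lambda>j. y i j - y i' j)" if i: "i < Mc" "i' < Mc" "i \<noteq> i'" for i i'
  proof -
    have yi: "y i \<in> unit_ball_Rk k N" and yi': "y i' \<in> unit_ball_Rk k N" using y i by auto
    have b1: "\<bar>fK i i - \<Phi> (y i) i\<bar> < \<delta>"
      using c0norm_ge[OF diff_bdd[OF Phi yi fi[of i]], where j=i] y[OF i(1)] by linarith
    have b2: "\<bar>fK i' i - \<Phi> (y i') i\<bar> < \<delta>"
      using c0norm_ge[OF diff_bdd[OF Phi yi' fi[of i']], where j=i] y[OF i(2)] by linarith
    have bd: "bdd_above (range (\<lambda>j. \<bar>\<Phi> (y i) j - \<Phi> (y i') j\<bar>))"
      by (intro c0_bdd' c0_diff lip_c0[OF Phi] yi yi')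
    have b3: "\<bar>\<Phi> (y i) i - \<Phi> (y i') i\<bar> \<le> \<gamma> * N (\<lambda>j. y i j - y i' j)"
      using c0norm_ge[OF bd, where j=i] lip_lip[OF Phi yi yi'] by linarith
    have "fK i i = sigma (i+1)" "fK i' i = 0" using i by (auto simp: fK_apply)
    hence "\<delta> < \<gamma> * N (\<lambda>j. y i j - y i' j)" using b1 b2 b3 Mc[OF i(1)] by linarith
    thus ?thesis using g by (simp add: field_simps)
  qed
  have inj: "inj_on y {..<Mc}"
  proof (rule inj_onI, rule ccontr)
    fix i i' assume "i \<in> {..<Mc}" "i' \<in> {..<Mc}" "y i = y i'" "i \<noteq> i'"
    hence "\<delta> / \<gamma> < N (\<lambda>j. 0)" using sep[of i i'] by auto
    thus False using norm_N_zero[OF N] divide_pos_pos[OF d g] by simp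
  qed
  have "card (y ` {..<Mc}) \<le> (nat \<lfloor>2 * real k / (\<delta> / \<gamma>)\<rfloor> + 1) ^ k"
  proof (rule packing[OF N k1])
    show "y ` {..<Mc} \<subseteq> unit_ball_Rk k N" using y by auto
    show "finite (y ` {..<Mc})" by simp
    show "0 < \<delta> / \<gamma>" using d g by simp
    fix s t assume "s \<in> y ` {..<Mc}" "t \<in> y ` {..<Mc}" "s \<noteq> t"
    then obtain i i' where "i < Mc" "i' < Mc" "s = y i" "t = y i'" "i \<noteq> i'" by auto
    thus "\<delta> / \<gamma> \<le> N (\<lambda>j. s j - t j)" using sep[of i i'] by simp
  qed
  moreover have "card (y ` {..<Mc}) = Mc" using card_image[OF inj] by simp
  ultimately show False using AF by simp
qed

lemma pow_plus_one_ge: "1 \<le> n \<Longrightarrow> (x::nat) ^ n + 1 \<le> (x + 1) ^ n"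
proof (induction n rule: dec_induct)
  case base thus ?case by simp
next
  case (step n)
  have "x ^ Suc n + 1 \<le> (x + 1) * (x ^ n + 1)" by (simp add: algebra_simps)
  also have "\<dots> \<le> (x + 1) * (x + 1) ^ n" using step.IH by (intro mult_left_mono) auto
  finally show ?case by simp
qed

lemma ex_m: "\<exists>m::nat. 3 \<le> m \<and> A * m + 2 \<le> 2 ^ (m - 3)"
proof -
  define s where "s = 2 * A + 3"
  have "s + 1 \<le> 2 ^ s" using less_exp[of s] by (simp add: Suc_le_eq)
  hence "(s + 1) ^ 2 \<le> (2 ^ s) ^ 2" by (rule power_mono) simp
  also have "((2::nat) ^ s) ^ 2 = 2 ^ (2 * s)" by (simp add: power_mult[symmetric] mult.commute)
  finally have h: "(s + 1) ^ 2 \<le> 2 ^ (2 * s)" .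
  have "A * (3 + 2 * s) + 2 \<le> (s + 1) ^ 2" unfolding s_def by (simp add: power2_eq_square algebra_simps)
  with h have "A * (3 + 2 * s) + 2 \<le> 2 ^ (3 + 2 * s - 3)" by simp
  thus ?thesis by (intro exI[of _ "3 + 2 * s"]) simp
qed

lemma log_le_n: "1 \<le> n \<Longrightarrow> log 2 (real n + 1) \<le> real n"
proof -
  assume n: "1 \<le> n"
  have "n + 1 \<le> 2 ^ n" using n
  proof (induction n rule: dec_induct)
    case base thus ?case by simp
  next
    case (step n) thus ?case by simp
  qed
  hence "real n + 1 \<le> 2 ^ n" by (metis of_nat_1 of_nat_add of_nat_le_iff of_nat_numeral of_nat_power)
  hence "log 2 (real n + 1) \<le> log 2 (2 ^ n)" by (intro log_mono) auto
  thus ?thesis by simp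
qed

lemma AF_arith:
  fixes g m n k :: nat and \<gamma> :: real
  assumes g: "0 < \<gamma>" "\<gamma> \<le> real g" and m: "3 \<le> m" "7 * g * m + 2 \<le> 2 ^ (m - 3)"
    and k: "1 \<le> k" "k \<le> n"
    and d: "\<delta> = 1 / (3 * real m * real n * log 2 (real n + 1))"
  shows "(nat \<lfloor>2 * real k / (\<delta> / \<gamma>)\<rfloor> + 1) ^ k < (n + 1) ^ (m * n) - 1"
proof -
  define L where "L = log 2 (real n + 1)"
  have n: "1 \<le> n" using k by simp
  have L: "0 < L" "L \<le> real n" unfolding L_def using n log_le_n[OF n] by auto
  have g1: "1 \<le> g" using g by linarith
  have "2 * real k / (\<delta> / \<gamma>) = 6 * \<gamma> * real m * real k * real n * L"
    using L g m n unfolding d L_def by (simp add: field_simps)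
  also have "\<dots> \<le> 6 * real g * real m * real n * real n * real n"
  proof -
    have kn: "real k \<le> real n" using k by simp
    have h1: "real k * real n * L \<le> real n * real n * real n"
      by (rule mult_mono[OF mult_right_mono[OF kn]]) (use L in auto)
    have h2: "\<gamma> * real m \<le> real g * real m" using g by (intro mult_right_mono) auto
    have "(\<gamma> * real m) * (real k * real n * L) \<le> (real g * real m) * (real n * real n * real n)"
      by (rule mult_mono[OF h2 h1]) (use g L in auto)
    thus ?thesis by (simp add: algebra_simps)
  qed
  also have "\<dots> = real (6 * g * m * n ^ 3)" by (simp add: power3_eq_cube)
  finally have "nat \<lfloor>2 * real k / (\<delta> / \<gamma>)\<rfloor> \<le> 6 * g * m * n ^ 3"
    by (metis floor_mono floor_of_nat nat_int nat_mono)
  hence base: "nat \<lfloor>2 * real k / (\<delta> / \<gamma>)\<rfloor> + 1 \<le> 6 * g * m * n ^ 3 + 1" by simp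
  define a where "a = 6 * g * m * n ^ 3 + 1"
  have a1: "1 \<le> a" unfolding a_def by simp
  have "(nat \<lfloor>2 * real k / (\<delta> / \<gamma>)\<rfloor> + 1) ^ k \<le> a ^ k" using base unfolding a_def by (rule power_mono) simp
  also have "\<dots> \<le> a ^ n" using a1 k by (intro power_increasing) auto
  finally have s1: "(nat \<lfloor>2 * real k / (\<delta> / \<gamma>)\<rfloor> + 1) ^ k \<le> a ^ n" .
  have "a + 2 \<le> (n + 1) ^ m"
  proof -
    have "(n + 1) ^ m = (n + 1) ^ 3 * (n + 1) ^ (m - 3)" using m by (simp flip: power_add)
    also have "(n+1) ^ (m - 3) \<ge> 2 ^ (m - 3)" using n by (intro power_mono) auto
    hence "(n + 1) ^ 3 * (n + 1) ^ (m - 3) \<ge> (n + 1) ^ 3 * (7 * g * m + 2)"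
      using m by (meson dual_order.trans mult_le_mono2)
    moreover have "(n + 1) ^ 3 \<ge> n ^ 3 + 1" using pow_plus_one_ge[of 3 n] by simp
    hence "(n + 1) ^ 3 * (7 * g * m + 2) \<ge> (n ^ 3 + 1) * (7 * g * m + 2)" by (intro mult_right_mono) auto
    moreover have "(n ^ 3 + 1) * (7 * g * m + 2) \<ge> a + 2"
    proof -
      have "1 \<le> g * m * n ^ 3" using g1 m n by simp
      thus ?thesis unfolding a_def by (simp add: algebra_simps)
    qed
    ultimately show ?thesis by linarith
  qed
  hence "(a + 2) ^ n \<le> ((n + 1) ^ m) ^ n" by (rule power_mono) simp
  also have "\<dots> = (n + 1) ^ (m * n)" by (simp add: power_mult)
  finally have s2: "(a + 2) ^ n \<le> (n + 1) ^ (m * n)" .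
  have "a ^ n + 1 \<le> (a + 1) ^ n" by (rule pow_plus_one_ge[OF n])
  moreover have "(a + 1) ^ n + 1 \<le> (a + 2) ^ n" using pow_plus_one_ge[OF n, of "a+1"] by simp
  ultimately have "a ^ n + 2 \<le> (n + 1) ^ (m * n)" using s2 by linarith
  thus ?thesis using s1 by linarith
qed



definition digit :: "nat \<Rightarrow> nat \<Rightarrow> nat \<Rightarrow> nat" where "digit b t i = (i div b ^ t) mod b"

lemma digit_distinct:
  assumes "1 \<le> b" shows "i < b^K \<Longrightarrow> i' < b^K \<Longrightarrow> i \<noteq> i' \<Longrightarrow> \<exists>t<K. digit b t i \<noteq> digit b t i'"
proof (induction K arbitrary: i i')
  case 0 thus ?case by simp
next
  case (Suc K)
  show ?case
  proof (cases "i mod b = i' mod b")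
    case False thus ?thesis by (intro exI[of _ 0]) (simp add: digit_def)
  next
    case True
    have "i div b \<noteq> i' div b" using True Suc.prems(3) by (metis div_mult_mod_eq)
    moreover have "i div b < b^K" "i' div b < b^K" using Suc.prems assms
      by (auto simp: div_less_iff_less_mult mult.commute)
    ultimately obtain t where t: "t < K" "digit b t (i div b) \<noteq> digit b t (i' div b)"
      using Suc.IH by blast
    have "digit b (Suc t) i \<noteq> digit b (Suc t) i'" using t(2) by (simp add: digit_def div_mult2_eq)
    thus ?thesis using t(1) by (intro exI[of _ "Suc t"]) simp
  qed
qed

definition pt :: "nat \<Rightarrow> nat \<Rightarrow> nat \<Rightarrow> nat \<Rightarrow> real" where
  "pt r kB i j = (if j = 0 then (if i < 2^(2^r) then -1 else 1)
     else if j \<le> 2^r then (if i < 2^(2^r) then real (digit 2 (j-1) i) else 0)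
     else if j < 1 + 2^r + kB then (if i < 2^(2^r) then 0 else real (digit (2^(r+1)) (j - 1 - 2^r) i) / 2^(r+1))
     else 0)"

definition Pn :: "nat \<Rightarrow> nat \<Rightarrow> nat" where "Pn r kB = max ((2^(r+1))^kB) (2^(2^r))"

definition Phi :: "nat \<Rightarrow> nat \<Rightarrow> (nat \<Rightarrow> real) \<Rightarrow> nat \<Rightarrow> real" where
  "Phi r kB y = (\<lambda>i. if i < Pn r kB then max 0 (sigma (i+1) - 2 * c0norm (\<lambda>j. y j - pt r kB i j)) else 0)"

lemma pt_Rk: "pt r kB i \<in> Rk (1 + 2^r + kB)"
  by (auto simp: Rk_def pt_def)

lemma pt_bound: "\<bar>pt r kB i j\<bar> \<le> 1"
proof -
  have d2: "digit 2 t i \<le> 1" for t by (simp add: digit_def)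
  have db: "real (digit (2^(r+1)) t i) / 2^(r+1) \<le> 1" for t
  proof -
    have "digit (2^(r+1)) t i < 2^(r+1)" by (simp add: digit_def)
    hence "real (digit (2^(r+1)) t i) \<le> 2^(r+1)" by (metis less_imp_le of_nat_le_iff of_nat_numeral of_nat_power)
    thus ?thesis by simp
  qed
  show ?thesis using d2[of "j-1"] db[of "j - 1 - 2^r"] unfolding pt_def by auto
qed

lemma pt_ball: "pt r kB i \<in> unit_ball_Rk (1 + 2^r + kB) c0norm"
  using pt_Rk pt_bound by (auto simp: unit_ball_Rk_def intro: c0norm_le)

lemma abs_nat_diff: "(a::nat) \<noteq> b \<Longrightarrow> 1 \<le> \<bar>real a - real b\<bar>"
  by (cases "a < b") auto

lemma sigma_le_big:
  assumes "2^(2^r) \<le> i'" shows "sigma (i'+1) \<le> 1 / 2^r"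
proof -
  have "real (2^(2^r)) \<le> real i' + 2" using assms by (metis add_increasing2 of_nat_le_iff zero_le_numeral of_nat_0_le_iff)
  hence "log 2 (2^(2^r)) \<le> log 2 (real i' + 2)" by (intro log_mono) auto
  hence "2^r \<le> log 2 (real (i'+1) + 1)" by (simp add: ac_simps)
  thus ?thesis unfolding sigma_def by (intro frac_le) auto
qed

lemma pt_sep:
  assumes ii: "i \<noteq> i'" "i < Pn r kB" "i' < Pn r kB"
  shows "sigma (i'+1) \<le> 2 * c0norm (\<lambda>j. pt r kB i j - pt r kB i' j)"
proof -
  let ?T = "(2::nat)^(2^r)"
  have bd: "bdd_above (range (\<lambda>j. \<bar>pt r kB i j - pt r kB i' j\<bar>))"
    using pt_bound[of r kB i] pt_bound[of r kB i'] by (intro bdd_of_bound[where B=2]) (simp add: abs_diff_le_iff; smt (verit))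
  have s1: "sigma (i'+1) \<le> 1" by (rule sigma_le1) simp
  have "\<exists>j. sigma (i'+1) \<le> 2 * \<bar>pt r kB i j - pt r kB i' j\<bar>"
  proof (cases "i < ?T")
    case iT: True
    show ?thesis
    proof (cases "i' < ?T")
      case True
      obtain t where t: "t < 2^r" "digit 2 t i \<noteq> digit 2 t i'"
        using digit_distinct[of 2 i "2^r" i'] iT True ii by auto
      have "1 \<le> \<bar>pt r kB i (t+1) - pt r kB i' (t+1)\<bar>"
        using t iT True abs_nat_diff[OF t(2)] by (simp add: pt_def)
      hence "sigma (i'+1) \<le> 2 * \<bar>pt r kB i (t+1) - pt r kB i' (t+1)\<bar>" using s1 by (smt (verit))
      thus ?thesis by blast
    next
      case False
      have "pt r kB i 0 - pt r kB i' 0 = -2" using iT False by (simp add: pt_def)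
      thus ?thesis using s1 by (intro exI[of _ 0]) simp
    qed
  next
    case iT: False
    show ?thesis
    proof (cases "i' < ?T")
      case True
      have "pt r kB i 0 - pt r kB i' 0 = 2" using iT True by (simp add: pt_def)
      thus ?thesis using s1 by (intro exI[of _ 0]) simp
    next
      case False
      have iQ: "i < (2^(r+1))^kB" "i' < (2^(r+1))^kB" using ii iT False by (auto simp: Pn_def)
      obtain t where t: "t < kB" "digit (2^(r+1)) t i \<noteq> digit (2^(r+1)) t i'"
        using digit_distinct[of "2^(r+1)" i kB i'] iQ ii by auto
      define j where "j = 1 + 2^r + t"
      have j: "j \<noteq> 0" "\<not> j \<le> 2^r" "j < 1 + 2^r + kB" "j - 1 - 2^r = t" using t by (auto simp: j_def)
      have "pt r kB i j - pt r kB i' j = (real (digit (2^(r+1)) t i) - real (digit (2^(r+1)) t i')) / 2^(r+1)"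
        using j iT False by (simp add: pt_def diff_divide_distrib)
      hence D1: "\<bar>pt r kB i j - pt r kB i' j\<bar> \<ge> 1 / 2^(r+1)"
        using abs_nat_diff[OF t(2)] by (simp add: divide_right_mono)
      have S1: "sigma (i'+1) \<le> 1 / 2^r" using False by (intro sigma_le_big) simp
      have e: "2 * (1 / 2^(r+1)) = (1::real) / 2^r" by simp
      have "sigma (i'+1) \<le> 2 * \<bar>pt r kB i j - pt r kB i' j\<bar>" using D1 S1 e by (smt (verit))
      thus ?thesis by blast
    qed
  qed
  then obtain j where J: "sigma (i'+1) \<le> 2 * \<bar>pt r kB i j - pt r kB i' j\<bar>" by blast
  have "\<bar>pt r kB i j - pt r kB i' j\<bar> \<le> c0norm (\<lambda>j. pt r kB i j - pt r kB i' j)" by (rule c0norm_ge[OF bd])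
  hence "2 * \<bar>pt r kB i j - pt r kB i' j\<bar> \<le> 2 * c0norm (\<lambda>j. pt r kB i j - pt r kB i' j)" by simp
  with J show ?thesis by (rule order_trans)
qed

lemma max_lip: "\<bar>max 0 (s - 2 * (a::real)) - max 0 (s - 2 * a')\<bar> \<le> 2 * \<bar>a - a'\<bar>"
  by (simp add: max_def abs_if) 

lemma c0norm_sym: "c0norm (\<lambda>i. y' i - y i) = c0norm (\<lambda>i. y i - y (i::nat) + (y i - y' i))"
  by (simp add: c0norm_def abs_minus_commute)

lemma Phi_lip:
  assumes g: "2 \<le> \<gamma>"
  shows "Phi r kB \<in> lip_maps \<gamma> (1 + 2^r + kB) c0norm"
  unfolding lip_maps_def
proof (intro CollectI conjI ballI)
  fix y show "Phi r kB y \<in> c0" by (rule c0_finsupp[of "Pn r kB"]) (simp add: Phi_def)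
next
  let ?k = "1 + 2^r + kB"
  fix y y' assume y: "y \<in> unit_ball_Rk ?k c0norm" and y': "y' \<in> unit_ball_Rk ?k c0norm"
  have yR: "y \<in> Rk ?k" "y' \<in> Rk ?k" using y y' by (auto simp: unit_ball_Rk_def)
  have dist: "\<bar>c0norm (\<lambda>j. y j - pt r kB i j) - c0norm (\<lambda>j. y' j - pt r kB i j)\<bar> \<le> c0norm (\<lambda>j. y j - y' j)" for i
  proof -
    have B1: "bdd_above (range (\<lambda>j. \<bar>y j - y' j\<bar>))" "bdd_above (range (\<lambda>j. \<bar>y' j - y j\<bar>))"
      using yR by (auto intro!: Rk_bdd Rk_diff)
    have B2: "bdd_above (range (\<lambda>j. \<bar>y' j - pt r kB i j\<bar>))" "bdd_above (range (\<lambda>j. \<bar>y j - pt r kB i j\<bar>))"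
      using yR pt_Rk by (auto intro!: Rk_bdd Rk_diff)
    have "c0norm (\<lambda>j. (y j - y' j) + (y' j - pt r kB i j)) \<le> c0norm (\<lambda>j. y j - y' j) + c0norm (\<lambda>j. y' j - pt r kB i j)"
      by (rule c0norm_triangle[OF B1(1) B2(1)])
    moreover have "c0norm (\<lambda>j. (y' j - y j) + (y j - pt r kB i j)) \<le> c0norm (\<lambda>j. y' j - y j) + c0norm (\<lambda>j. y j - pt r kB i j)"
      by (rule c0norm_triangle[OF B1(2) B2(2)])
    moreover have "c0norm (\<lambda>j. y' j - y j) = c0norm (\<lambda>j. y j - y' j)"
      by (simp add: c0norm_def abs_minus_commute)
    ultimately show ?thesis by (simp add: abs_le_iff)
  qed
  have c0n: "0 \<le> c0norm (\<lambda>j. y j - y' j)" using yR by (intro c0norm_nonneg Rk_bdd Rk_diff)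
  have "c0norm (\<lambda>i. Phi r kB y i - Phi r kB y' i) \<le> 2 * c0norm (\<lambda>j. y j - y' j)"
  proof (rule c0norm_le)
    fix i
    show "\<bar>Phi r kB y i - Phi r kB y' i\<bar> \<le> 2 * c0norm (\<lambda>j. y j - y' j)"
    proof (cases "i < Pn r kB")
      case True
      have "\<bar>Phi r kB y i - Phi r kB y' i\<bar> \<le> 2 * \<bar>c0norm (\<lambda>j. y j - pt r kB i j) - c0norm (\<lambda>j. y' j - pt r kB i j)\<bar>"
        using True unfolding Phi_def by (simp only: if_True) (rule max_lip)
      also have "\<dots> \<le> 2 * c0norm (\<lambda>j. y j - y' j)" using dist[of i] by simp
      finally show ?thesis .
    qed (simp add: Phi_def c0n)
  qed
  also have "\<dots> \<le> \<gamma> * c0norm (\<lambda>j. y j - y' j)" using g c0n by (intro mult_right_mono) auto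
  finally show "c0norm (\<lambda>i. Phi r kB y i - Phi r kB y' i) \<le> \<gamma> * c0norm (\<lambda>i. y i - y' i)" .
qed

lemma Phi_pt: assumes i: "i < Pn r kB" shows "Phi r kB (pt r kB i) = fK i"
proof
  fix l
  show "Phi r kB (pt r kB i) l = fK i l"
  proof (cases "l = i")
    case True
    have "sigma (i+1) > 0" by (simp add: sigma_pos)
    thus ?thesis using True i by (simp add: Phi_def fK_apply c0norm_zero)
  next
    case False
    show ?thesis
    proof (cases "l < Pn r kB")
      case True
      have "sigma (l+1) \<le> 2 * c0norm (\<lambda>j. pt r kB i j - pt r kB l j)"
        using pt_sep[of i l r kB] False True i by auto
      thus ?thesis using True False by (simp add: Phi_def fK_apply)
    qed (use False in \<open>simp add: Phi_def fK_apply\<close>)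
  qed
qed

lemma Phi_zero: "Phi r kB (\<lambda>i. 0) = (\<lambda>i. 0)"
proof
  fix i
  have bd: "bdd_above (range (\<lambda>j. \<bar>0 - pt r kB i j\<bar>))"
    using pt_bound by (intro bdd_of_bound[where B=1]) simp
  have "\<bar>0 - pt r kB i 0\<bar> = 1" by (simp add: pt_def)
  hence "1 \<le> c0norm (\<lambda>j. 0 - pt r kB i j)" using c0norm_ge[OF bd, where j=0] by simp
  moreover have "sigma (i+1) \<le> 1" by (rule sigma_le1) simp
  ultimately show "Phi r kB (\<lambda>i. 0) i = 0" by (simp add: Phi_def)
qed

lemma construct:
  assumes g: "2 \<le> \<gamma>" and kB: "1 \<le> kB" and n: "1 + 2^r + kB \<le> n"
  shows "lip_width \<gamma> Ksigma n \<le> 1 / (real (r+1) * real kB)"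
proof (rule lw_upper[of "1 + 2^r + kB" n \<gamma> "Phi r kB"])
  show "Phi r kB \<in> lip_maps \<gamma> (1 + 2^r + kB) c0norm" by (rule Phi_lip[OF g])
  let ?k = "1 + 2^r + kB"
  let ?E = "1 / (real (r+1) * real kB)"
  have E0: "0 \<le> ?E" by simp
  fix f assume f: "f \<in> Ksigma"
  have z: "(\<lambda>i. 0) \<in> unit_ball_Rk ?k c0norm" by (rule ball_zero[OF c0norm_is_norm])
  consider "f = (\<lambda>i. 0)" | i where "f = fK i" using f by (auto simp: Ksigma_eq)
  thus "\<exists>y\<in>unit_ball_Rk ?k c0norm. c0norm (\<lambda>l. f l - Phi r kB y l) \<le> ?E"
  proof cases
    case 1 thus ?thesis using z E0 by (intro bexI[of _ "\<lambda>i. 0"]) (simp_all add: Phi_zero c0norm_zero)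
  next
    case (2 i)
    show ?thesis
    proof (cases "i < Pn r kB")
      case True
      thus ?thesis using E0 pt_ball[of r kB i] by (intro bexI[of _ "pt r kB i"]) (simp_all add: 2 Phi_pt c0norm_zero)
    next
      case False
      have "max (((2::nat)^(r+1))^kB) (2^(2^r)) \<le> i" using False unfolding Pn_def by (simp only: not_less)
      hence "((2::nat)^(r+1))^kB \<le> i" using max.cobounded1 order_trans by blast
      hence iQ: "2 ^ ((r+1) * kB) \<le> i" by (simp only: power_mult)
      have "real (2 ^ ((r+1) * kB)) \<le> real i + 2" using iQ
        by (metis add_increasing2 of_nat_le_iff zero_le_numeral of_nat_0_le_iff)
      hence "log 2 (2 ^ ((r+1) * kB)) \<le> log 2 (real i + 2)" by (intro log_mono) auto
      hence "real ((r+1) * kB) \<le> log 2 (real (i+1) + 1)" by (simp add: ac_simps)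
      hence lg: "real (r+1) * real kB \<le> log 2 (real (i+1) + 1)" by (simp only: of_nat_mult)
      have "0 < (r+1) * kB" using kB by simp
      hence "0 < real ((r+1) * kB)" by (simp only: of_nat_0_less_iff)
      hence w: "0 < real (r+1) * real kB" by (simp only: of_nat_mult)
      have "sigma (i+1) \<le> ?E" unfolding sigma_def by (rule frac_le) (use w lg in auto)
      hence "c0norm (\<lambda>l. f l - Phi r kB (\<lambda>i. 0) l) \<le> ?E"
        using sigma_pos[of "i+1"] by (intro c0norm_le) (auto simp: 2 Phi_zero fK_apply)
      thus ?thesis using z by blast
    qed
  qed
qed (use g n in auto)



lemma lw_upper_final:
  assumes g: "2 \<le> \<gamma>" and n: "1 \<le> n"
  shows "lip_width \<gamma> Ksigma n \<le> 64 * (1 / (real n * log 2 (real n + 1)))"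
proof -
  define L where "L = log 2 (real n + 1)"
  have L0: "0 < L" unfolding L_def using n by simp
  have nL0: "0 < real n * L" using n L0 by simp
  show ?thesis
  proof (cases "n < 16")
    case True
    have "n \<le> 15" using True by simp
    hence n15: "real n \<le> 15" by simp
    hence "L \<le> log 2 (2 ^ 4)" unfolding L_def by (intro log_mono) auto
    also have "log 2 (2 ^ 4) = (4::real)" by (subst log_pow_cancel) auto
    finally have L4: "L \<le> 4" .
    have "real n * L \<le> 15 * 4" using n15 L4 L0 by (intro mult_mono) auto
    hence "1 \<le> 64 * (1 / (real n * L))" using nL0 by (simp add: field_simps)
    moreover have "lip_width \<gamma> Ksigma n \<le> 1" using lw_trivial[OF n] g by simp
    ultimately show ?thesis unfolding L_def by linarith
  next
    case False
    obtain a where a: "2^a \<le> n" "n < 2^(a+1)" using ex_power_ivl1[of 2 n] n by auto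
    define r where "r = a div 2"
    define kB where "kB = n - 1 - 2^r"
    have "(2::nat)^r * 2^r = 2^(2*r)" by (simp add: power_add[symmetric] mult_2)
    also have "\<dots> \<le> 2^a" unfolding r_def by (intro power_increasing) auto
    finally have sq: "(2::nat)^r * 2^r \<le> n" using a by linarith
    have "(4 * 2^r) ^ 2 \<le> n ^ 2"
    proof -
      have "(4 * 2^r) ^ 2 = 16 * ((2::nat)^r * 2^r)" by (simp add: power2_eq_square)
      also have "\<dots> \<le> 16 * n" using sq by simp
      also have "\<dots> \<le> n * n" using False by simp
      finally show ?thesis by (simp add: power2_eq_square)
    qed
    hence q: "4 * 2^r \<le> n" by (rule power2_le_imp_le) simp
    have kB1: "1 \<le> kB" and kBn: "1 + 2^r + kB \<le> n" and kB2: "n \<le> 2 * kB"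
      using q False unfolding kB_def by auto
    have c: "lip_width \<gamma> Ksigma n \<le> 1 / (real (r+1) * real kB)" by (rule construct[OF g kB1 kBn])
    have "n + 1 \<le> 2 ^ (a+1)" using a(2) by simp
    hence "real (n + 1) \<le> real (2 ^ (a+1))" by (simp only: of_nat_le_iff)
    hence "real n + 1 \<le> 2 ^ (a+1)" by simp
    hence "L \<le> log 2 (2 ^ (a+1))" unfolding L_def by (intro log_mono) auto
    also have "\<dots> = real (a+1)" by (rule log_pow_cancel) auto
    finally have La: "L \<le> real a + 1" by simp
    have "a + 1 \<le> 2 * (r + 1)" unfolding r_def by presburger
    hence "real (a + 1) \<le> real (2 * (r + 1))" by (simp only: of_nat_le_iff)
    hence ar: "real a + 1 \<le> 2 * real (r+1)" by simp
    have "real n * L \<le> (2 * real kB) * (2 * real (r+1))"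
      using kB2 La ar L0 by (intro mult_mono) auto
    hence key: "real n * L \<le> 4 * (real (r+1) * real kB)" by (simp add: algebra_simps)
    have "1 / (real (r+1) * real kB) = 4 / (4 * (real (r+1) * real kB))" using kB1 by simp
    also have "\<dots> \<le> 4 / (real n * L)" using key nL0 by (intro frac_le) auto
    also have "\<dots> \<le> 64 * (1 / (real n * L))" using nL0 by (simp add: field_simps)
    finally show ?thesis using c unfolding L_def by linarith
  qed
qed

lemma lw_lower_final:
  assumes g: "2 < \<gamma>"
  obtains m :: nat where "3 \<le> m"
    and "\<forall>n. 1 \<le> n \<longrightarrow> (1 / (3 * real m)) * (1 / (real n * log 2 (real n + 1))) \<le> lip_width \<gamma> Ksigma n"
proof -
  define gg where "gg = nat \<lceil>\<gamma>\<rceil>"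
  have gg: "\<gamma> \<le> real gg" unfolding gg_def by (simp add: real_nat_ceiling_ge)
  obtain m where m: "3 \<le> m" "7 * gg * m + 2 \<le> 2^(m-3)" using ex_m[of "7*gg"] by (auto simp: mult.assoc)
  show thesis
  proof (rule that[OF m(1)], intro allI impI)
    fix n :: nat assume n: "1 \<le> n"
    define \<delta> where "\<delta> = 1 / (3 * real m * real n * log 2 (real n + 1))"
    have eq: "(1 / (3 * real m)) * (1 / (real n * log 2 (real n + 1))) = \<delta>" by (simp add: \<delta>_def)
    have L0: "0 < log 2 (real n + 1)" using n by simp
    have d0: "0 < \<delta>" using m n L0 by (simp add: \<delta>_def)
    have "\<delta> \<le> lip_width \<gamma> Ksigma n"
    proof (rule lw_lower[OF n])
      show "0 \<le> \<gamma>" using g by simp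
      fix k N \<Phi> assume k: "1 \<le> k" "k \<le> n" and N: "is_norm_on_Rk k N" and Phi: "\<Phi> \<in> lip_maps \<gamma> k N"
      show "\<delta> \<le> (SUP f\<in>Ksigma. gval k N \<Phi> f)"
      proof (rule core_lower[OF N k(1) Phi _ d0])
        show "0 < \<gamma>" using g by simp
        show "(nat \<lfloor>2 * real k / (\<delta> / \<gamma>)\<rfloor> + 1) ^ k < (n+1)^(m*n) - 1"
          by (rule AF_arith[OF _ gg m k \<delta>_def]) (use g in simp)
        fix i assume i: "i < (n+1)^(m*n) - 1"
        have "i + 2 \<le> (n+1)^(m*n)" using i by simp
        hence "real (i+2) \<le> real ((n+1)^(m*n))" by (simp only: of_nat_le_iff)
        hence "real i + 2 \<le> (real n + 1)^(m*n)" by (simp add: ac_simps)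
        hence "log 2 (real i + 2) \<le> log 2 ((real n + 1)^(m*n))" by (intro log_mono) auto
        also have "\<dots> = real (m*n) * log 2 (real n + 1)" by (simp add: log_nat_power)
        finally have lg: "log 2 (real (i+1) + 1) \<le> real m * real n * log 2 (real n + 1)" by (simp add: ac_simps)
        have lp: "0 < log 2 (real (i+1) + 1)" by simp
        have "3 * \<delta> = 1 / (real m * real n * log 2 (real n + 1))" by (simp add: \<delta>_def)
        also have "\<dots> \<le> 1 / log 2 (real (i+1) + 1)" using lg lp by (intro frac_le) auto
        finally show "3 * \<delta> \<le> sigma (i+1)" by (simp add: sigma_def)
      qed
    qed
    thus "(1 / (3 * real m)) * (1 / (real n * log 2 (real n + 1))) \<le> lip_width \<gamma> Ksigma n" using eq by simp
  qed
qed

theorem theorem4p10: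
  shows "(\<exists>c C. 0 < c \<and> 0 < C \<and> (\<forall>n::nat. n \<ge> 1 \<longrightarrow>
            c * (1 / real n) \<le> inner_entropy Ksigma n \<and>
            inner_entropy Ksigma n \<le> C * (1 / real n)))
       \<and> (\<forall>\<gamma>::real. \<gamma> > 2 \<longrightarrow>
          (\<exists>c C. 0 < c \<and> 0 < C \<and> (\<forall>n::nat. n \<ge> 1 \<longrightarrow>
            c * (1 / (real n * log 2 (real n + 1))) \<le> lip_width \<gamma> Ksigma n \<and>
            lip_width \<gamma> Ksigma n \<le> C * (1 / (real n * log 2 (real n + 1))))))"
proof (intro conjI allI impI)
  have "\<forall>n::nat. n \<ge> 1 \<longrightarrow> (1/2) * (1 / real n) \<le> inner_entropy Ksigma n \<and>
            inner_entropy Ksigma n \<le> 1 * (1 / real n)"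
    using entropy_lower entropy_upper by simp
  thus "\<exists>c C. 0 < c \<and> 0 < C \<and> (\<forall>n::nat. n \<ge> 1 \<longrightarrow>
            c * (1 / real n) \<le> inner_entropy Ksigma n \<and>
            inner_entropy Ksigma n \<le> C * (1 / real n))"
    by (intro exI[of _ "1/2"] exI[of _ 1]) simp
next
  fix \<gamma> :: real assume g: "\<gamma> > 2"
  obtain m where m: "3 \<le> m" and lo: "\<forall>n. 1 \<le> n \<longrightarrow> (1 / (3 * real m)) * (1 / (real n * log 2 (real n + 1))) \<le> lip_width \<gamma> Ksigma n"
    using lw_lower_final[OF g] by blast
  have up: "\<forall>n. 1 \<le> n \<longrightarrow> lip_width \<gamma> Ksigma n \<le> 64 * (1 / (real n * log 2 (real n + 1)))"
    using lw_upper_final g by simp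
  show "\<exists>c C. 0 < c \<and> 0 < C \<and> (\<forall>n::nat. n \<ge> 1 \<longrightarrow>
            c * (1 / (real n * log 2 (real n + 1))) \<le> lip_width \<gamma> Ksigma n \<and>
            lip_width \<gamma> Ksigma n \<le> C * (1 / (real n * log 2 (real n + 1))))"
    using m lo up by (intro exI[of _ "1 / (3 * real m)"] exI[of _ 64]) simp
qed

end
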